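(* Let $A \in \mathbb{Z}_+^{n\times m}$ and $B \in \mathbb{Z}_+^{k \times m}$ be nonnegative integer matrices, both of rank $r$. Suppose that: (i) $A$ and $B$ have the same row space; (ii) for every $x \in \mathbb{R}^m$, $Ax \in \mathbb{Z}^n$ if and only if $Bx \in \mathbb{Z}^k$; (iii) for every $x \in \mathbb{R}^m$, $Ax \geq 0$ (entrywise) if and only if $Bx \geq 0$ (entrywise). Then either $\operatorname{rank}_{\mathbb{Z}_+}(A)=\operatorname{rank}_{\mathbb{Z}_+}(B)=r$, or both $\operatorname{rank}_{\mathbb{Z}_+}(A) > r$ and $\operatorname{rank}_{\mathbb{Z}_+}(B) > r$.
   Context: For a matrix $A \in \mathbb{Z}_+^{n\times m}$, its nonnegative integer rank $\operatorname{rank}_{\mathbb{Z}_+}(A)$ is the smallest integer $k$ such that there exist matrices $B \in \mathbb{Z}_+^{n\times k}$ and $C \in \mathbb{Z}_+^{k\times m}$ with $A = BC$, where $\mathbb{Z}_+$ denotes the nonnegative integers. *)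

theory Defs
  imports "Jordan_Normal_Form.DL_Rank" "Jordan_Normal_Form.VS_Connect"
begin

definition nn_int_rank :: "nat mat \<Rightarrow> nat" where
  "nn_int_rank A = (LEAST k. \<exists>B C. B \<in> carrier_mat (dim_row A) k \<and>
      C \<in> carrier_mat k (dim_col A) \<and> A = B * C)"

abbreviation real_mat :: "nat mat \<Rightarrow> real mat" where
  "real_mat A \<equiv> map_mat real A"

end

theory Submission
  imports Defs
begin

lemma (in vec_space) exists_max_indep:
  assumes M: "M \<in> carrier_mat n c"
  obtains S where "maximal S (\<lambda>T. T \<subseteq> set (cols M) \<and> lin_indpt T)"
  using maximal_exists[of "(\<lambda>T. T \<subseteq> set (cols M) \<and> lin_indpt T)" "card (set (cols M))" "{}"]
  by (meson List.finite_set card_mono empty_iff empty_subsetI finite_lin_indpt2 rev_finite_subset)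

lemma (in vec_space) rank_le_span:
  assumes M: "M \<in> carrier_mat n c" and T: "T \<subseteq> carrier_vec n" "finite T"
    and sub: "set (cols M) \<subseteq> span T"
  shows "rank M \<le> card T"
proof -
  obtain S where S: "maximal S (\<lambda>T. T \<subseteq> set (cols M) \<and> lin_indpt T)"
    using exists_max_indep[OF M] by blast
  have r: "rank M = card S" by (rule rank_card_indpt[OF M S])
  have Ssub: "S \<subseteq> set (cols M)" "lin_indpt S" using S unfolding maximal_def by auto
  have fS: "finite S" using Ssub(1) finite_subset by blast
  have ST: "S \<subseteq> span T" using Ssub(1) sub by blast
  have TV: "T \<subseteq> carrier V" using T(1) by simp
  have "card S \<le> card T" using replacement[OF fS T(2) T(1) Ssub(2) ST] by auto
  thus ?thesis using r by auto
qed

lemma (in vec_space) maximal_span: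
  assumes X: "X \<subseteq> carrier_vec n" and S: "maximal S (\<lambda>T. T \<subseteq> X \<and> lin_indpt T)"
  shows "X \<subseteq> span S"
proof
  fix s assume s: "s \<in> X"
  have SX: "S \<subseteq> X" "lin_indpt S" using S unfolding maximal_def by auto
  show "s \<in> span S"
  proof (rule ccontr)
    assume ns: "s \<notin> span S"
    have "s \<notin> S" using ns SX X in_own_span by blast
    then have "lin_indpt (S \<union> {s})" using lin_dep_iff_in_span[of S s] ns SX X s by auto
    moreover have "S \<union> {s} \<subseteq> X" using SX s by auto
    ultimately have "S \<union> {s} = S" using S unfolding maximal_def by blast
    then show False using \<open>s \<notin> S\<close> by auto
  qed
qed

lemma (in vec_space) full_span_of_rank:
  fixes Vm Um :: "'a mat"
  assumes Vm: "Vm \<in> carrier_mat n m" and Um: "Um \<in> carrier_mat nr n"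
    and rk: "vec_space.rank nr (Um * Vm) \<ge> n"
  shows "\<forall>y \<in> carrier_vec n. \<exists>x \<in> carrier_vec m. Vm *\<^sub>v x = y"
proof -
  obtain S where S: "maximal S (\<lambda>T. T \<subseteq> set (cols Vm) \<and> lin_indpt T)"
    using exists_max_indep[OF Vm] by blast
  have Ssub: "S \<subseteq> set (cols Vm)" "lin_indpt S" using S unfolding maximal_def by auto
  have colsV: "set (cols Vm) \<subseteq> carrier_vec n" using Vm cols_dim by blast
  have fS: "finite S" using Ssub(1) finite_subset by blast
  have SV: "S \<subseteq> carrier_vec n" using Ssub colsV by blast
  have span1: "set (cols Vm) \<subseteq> span S" by (rule maximal_span[OF colsV S])
  obtain ss where ss: "set ss = S" "distinct ss" using finite_distinct_list[OF fS] by blast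
  define Q where "Q = mat_of_cols n ss"
  define d where "d = length ss"
  have Q: "Q \<in> carrier_mat n d" unfolding Q_def d_def by auto
  have colsQ: "cols Q = ss" unfolding Q_def using ss SV by (intro cols_mat_of_cols) auto
  have spanQ: "span S = {y \<in> carrier_vec n. \<exists>x \<in> carrier_vec d. Q *\<^sub>v x = y}"
    using col_space_eq[OF Q] Q unfolding col_space_def colsQ ss(1) by simp
  have "\<forall>c < m. \<exists>y \<in> carrier_vec d. col Vm c = Q *\<^sub>v y"
  proof (intro allI impI)
    fix c assume c: "c < m"
    have "col Vm c \<in> set (cols Vm)" using c Vm by (simp add: cols_def)
    then have "col Vm c \<in> {y \<in> carrier_vec n. \<exists>x \<in> carrier_vec d. Q *\<^sub>v x = y}" using span1 spanQ by blast
    then obtain x where x: "x \<in> carrier_vec d" "Q *\<^sub>v x = col Vm c" by blast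
    show "\<exists>y \<in> carrier_vec d. col Vm c = Q *\<^sub>v y"
      apply (rule bexI[of _ x])
      using x apply simp
      using x by simp
  qed
  then obtain yf where yf: "\<And>c. c < m \<Longrightarrow> yf c \<in> carrier_vec d \<and> col Vm c = Q *\<^sub>v yf c" by metis
  have UQ: "Um * Q \<in> carrier_mat nr d" using Um Q by auto
  have UV: "Um * Vm \<in> carrier_mat nr m" using Um Vm by auto
  have "vec_space.rank nr (Um*Vm) \<le> card (set (cols (Um*Q)))"
  proof (rule vec_space.rank_le_span[OF UV])
    show "set (cols (Um * Q)) \<subseteq> carrier_vec nr" using UQ cols_dim by blast
    show "finite (set (cols (Um * Q)))" by simp
    show "set (cols (Um * Vm)) \<subseteq> LinearCombinations.module.span class_ring (module_vec TYPE('a) nr) (set (cols (Um * Q)))"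
    proof
      fix v assume "v \<in> set (cols (Um * Vm))"
      then obtain c where c: "c < m" "v = col (Um * Vm) c" using UV unfolding cols_def by auto
      have "v = Um *\<^sub>v col Vm c" unfolding c(2) by (rule col_mult2[OF Um Vm c(1)])
      also have "\<dots> = (Um * Q) *\<^sub>v yf c" using yf[OF c(1)] Um Q by simp
      finally have veq: "v = (Um * Q) *\<^sub>v yf c" .
      have eq: "LinearCombinations.module.span class_ring (module_vec TYPE('a) nr) (set (cols (Um * Q)))
          = {y \<in> carrier_vec nr. \<exists>x \<in> carrier_vec d. (Um * Q) *\<^sub>v x = y}"
        using vec_space.col_space_eq[OF UQ] unfolding vec_space.col_space_def carrier_matD[OF UQ] .
      have "(Um*Q) *\<^sub>v yf c \<in> carrier_vec nr" using UQ yf[OF c(1)] by auto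
      moreover have "\<exists>x \<in> carrier_vec d. (Um*Q) *\<^sub>v x = (Um*Q) *\<^sub>v yf c" using yf[OF c(1)] by blast
      ultimately show "v \<in> LinearCombinations.module.span class_ring (module_vec TYPE('a) nr) (set (cols (Um * Q)))"
        unfolding eq veq by blast
    qed
  qed
  also have "\<dots> \<le> d" using UQ by (metis card_length cols_length carrier_matD(2))
  also have "d = card S" unfolding d_def using ss distinct_card by fastforce
  finally have geS: "n \<le> card S" using rk by simp
  have "card S \<le> dim" using li_le_dim(2)[OF fin_dim SV Ssub(2)] .
  have "basis S" by (rule dim_li_is_basis[OF fin_dim fS SV Ssub(2)]) (use geS dim_is_n in simp)
  then have "span S = carrier_vec n" unfolding basis_def by simp
  moreover have "span S \<subseteq> span (set (cols Vm))" by (rule span_is_monotone[OF Ssub(1)])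
  ultimately have "carrier_vec n \<subseteq> span (set (cols Vm))" by simp
  then show ?thesis using col_space_eq[OF Vm] Vm unfolding col_space_def by auto
qed


lemma real_mat_mult:
  fixes A B :: "nat mat"
  assumes "A \<in> carrier_mat n j" "B \<in> carrier_mat j m"
  shows "map_mat real (A * B) = map_mat real A * map_mat real B"
  using assms by (intro eq_matI) (auto simp: scalar_prod_def)

lemma rank_le_factor:
  fixes U V :: "real mat"
  assumes U: "U \<in> carrier_mat n j" and V: "V \<in> carrier_mat j m"
  shows "vec_space.rank n (U * V) \<le> j"
proof -
  have UV: "U * V \<in> carrier_mat n m" using U V by auto
  have "vec_space.rank n (U * V) \<le> card (set (cols U))"
  proof (rule vec_space.rank_le_span[OF UV])
    show "set (cols U) \<subseteq> carrier_vec n" using U cols_dim by blast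
    show "finite (set (cols U))" by simp
    show "set (cols (U * V)) \<subseteq> LinearCombinations.module.span class_ring (module_vec TYPE(real) n) (set (cols U))"
    proof
      fix v assume "v \<in> set (cols (U * V))"
      then obtain c where c: "c < m" "v = col (U * V) c" using UV unfolding cols_def by auto
      have veq: "v = U *\<^sub>v col V c" unfolding c(2) by (rule col_mult2[OF U V c(1)])
      have eq: "LinearCombinations.module.span class_ring (module_vec TYPE(real) n) (set (cols U))
          = {y \<in> carrier_vec n. \<exists>x \<in> carrier_vec j. U *\<^sub>v x = y}"
        using vec_space.col_space_eq[OF U] unfolding vec_space.col_space_def carrier_matD[OF U] .
      have "U *\<^sub>v col V c \<in> carrier_vec n" using U unfolding carrier_vec_def by simp
      moreover have "col V c \<in> carrier_vec j" using V by auto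
      ultimately show "v \<in> LinearCombinations.module.span class_ring (module_vec TYPE(real) n) (set (cols U))"
        unfolding eq veq by blast
    qed
  qed
  also have "\<dots> \<le> j" using U by (metis card_length cols_length carrier_matD(2))
  finally show ?thesis .
qed

lemma key_real:
  fixes A B U V :: "real mat"
  assumes A: "A \<in> carrier_mat n m" and B: "B \<in> carrier_mat k m"
    and U: "U \<in> carrier_mat n r" and V: "V \<in> carrier_mat r m" and AUV: "A = U * V"
    and rk: "vec_space.rank n A = r"
    and integ: "\<forall>x \<in> carrier_vec m. (\<forall>i<n. (A *\<^sub>v x) $ i \<in> \<int>) \<longrightarrow> (\<forall>i<k. (B *\<^sub>v x) $ i \<in> \<int>)"
    and nonneg: "\<forall>x \<in> carrier_vec m. (\<forall>i<n. (A *\<^sub>v x) $ i \<ge> 0) \<longrightarrow> (\<forall>i<k. (B *\<^sub>v x) $ i \<ge> 0)"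
    and Uent: "\<forall>i<n. \<forall>j<r. U $$ (i,j) \<in> \<int> \<and> U $$ (i,j) \<ge> 0"
  shows "\<exists>W \<in> carrier_mat k r. B = W * V \<and> (\<forall>i<k. \<forall>j<r. W $$ (i,j) \<in> \<int> \<and> W $$ (i,j) \<ge> 0)"
proof -
  have surj: "\<forall>y \<in> carrier_vec r. \<exists>x \<in> carrier_vec m. V *\<^sub>v x = y"
    by (rule vec_space.full_span_of_rank[OF V U]) (use rk AUV in simp)
  have "\<forall>j<r. \<exists>x \<in> carrier_vec m. V *\<^sub>v x = unit_vec r j" using surj by auto
  then obtain xf where xf: "\<And>j. j < r \<Longrightarrow> xf j \<in> carrier_vec m \<and> V *\<^sub>v xf j = unit_vec r j" by metis
  define R where "R = mat m r (\<lambda>(i,j). xf j $ i)"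
  have R: "R \<in> carrier_mat m r" unfolding R_def by auto
  have colR: "col R j = xf j" if "j < r" for j
    using xf[OF that] that unfolding R_def by (intro eq_vecI) auto
  have VR: "V * R = 1\<^sub>m r"
  proof (rule eq_matI)
    fix i j assume ij: "i < dim_row (1\<^sub>m r)" "j < dim_col (1\<^sub>m r)"
    then have "(V * R) $$ (i,j) = (V *\<^sub>v col R j) $ i" using V R by simp
    also have "\<dots> = unit_vec r j $ i" using colR xf ij by simp
    also have "\<dots> = 1\<^sub>m r $$ (i,j)" using ij by simp
    finally show "(V * R) $$ (i,j) = 1\<^sub>m r $$ (i,j)" .
  qed (use V R in auto)
  have ker: "B *\<^sub>v x = 0\<^sub>v k" if x: "x \<in> carrier_vec m" and Ax: "A *\<^sub>v x = 0\<^sub>v n" for x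
  proof -
    have mx: "(-1) \<cdot>\<^sub>v x \<in> carrier_vec m" using x by simp
    have Amx: "A *\<^sub>v ((-1) \<cdot>\<^sub>v x) = (-1) \<cdot>\<^sub>v (A *\<^sub>v x)" by (rule mult_mat_vec[OF A x])
    have Bmx: "B *\<^sub>v ((-1) \<cdot>\<^sub>v x) = (-1) \<cdot>\<^sub>v (B *\<^sub>v x)" by (rule mult_mat_vec[OF B x])
    have p1: "\<forall>i<k. (B *\<^sub>v x) $ i \<ge> 0" using nonneg x Ax by auto
    have "\<forall>i<n. (A *\<^sub>v ((-1) \<cdot>\<^sub>v x)) $ i \<ge> 0" unfolding Amx Ax by simp
    then have p2: "\<forall>i<k. (B *\<^sub>v ((-1) \<cdot>\<^sub>v x)) $ i \<ge> 0" using nonneg mx by blast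
    show ?thesis
    proof (rule eq_vecI)
      fix i assume "i < dim_vec (0\<^sub>v k)"
      then have i: "i < k" by simp
      have "(B *\<^sub>v ((-1) \<cdot>\<^sub>v x)) $ i = - (B *\<^sub>v x) $ i" unfolding Bmx using i B by simp
      then show "(B *\<^sub>v x) $ i = 0\<^sub>v k $ i" using p1 p2 i by fastforce
    qed (use B in simp)
  qed
  define D where "D = 1\<^sub>m m - R * V"
  have D: "D \<in> carrier_mat m m" unfolding D_def using R V by auto
  have AD: "A * D = 0\<^sub>m n m"
  proof -
    have "A * D = A * 1\<^sub>m m - A * (R * V)" unfolding D_def
      by (rule mult_minus_distrib_mat[OF A]) (use R V in auto)
    also have "A * (R * V) = U * (V * (R * V))" unfolding AUV using R V by (intro assoc_mult_mat[OF U V]) auto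
    also have "V * (R * V) = (V * R) * V" using V R by simp
    also have "\<dots> = V" unfolding VR using V by simp
    also have "U * V = A" using AUV by simp
    finally show ?thesis using A by simp
  qed
  have BD: "B * D = 0\<^sub>m k m"
  proof (rule eq_matI)
    fix i c assume ic: "i < dim_row (0\<^sub>m k m)" "c < dim_col (0\<^sub>m k m)"
    have cD: "col D c \<in> carrier_vec m" using D by auto
    have "A *\<^sub>v col D c = col (A * D) c" using A D ic by (intro col_mult2[symmetric]) auto
    also have "\<dots> = 0\<^sub>v n" unfolding AD using ic by (intro eq_vecI) auto
    finally have "B *\<^sub>v col D c = 0\<^sub>v k" using ker cD by blast
    moreover have "(B * D) $$ (i,c) = (B *\<^sub>v col D c) $ i" using B D ic by simp
    ultimately show "(B * D) $$ (i,c) = 0\<^sub>m k m $$ (i,c)" using ic by simp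
  qed (use B D in auto)
  define W where "W = B * R"
  have W: "W \<in> carrier_mat k r" unfolding W_def using B R by auto
  have BWV: "B = W * V"
  proof -
    have "B * D = B * 1\<^sub>m m - B * (R * V)" unfolding D_def
      by (rule mult_minus_distrib_mat[OF B]) (use R V in auto)
    then have eq0: "B - W * V = 0\<^sub>m k m" unfolding W_def BD using B R V by simp
    show ?thesis
    proof (rule eq_matI)
      fix i j assume "i < dim_row (W * V)" "j < dim_col (W * V)"
      then have ij: "i < k" "j < m" using W V by auto
      have "(B - W * V) $$ (i,j) = 0" unfolding eq0 using ij by simp
      then show "B $$ (i,j) = (W * V) $$ (i,j)" using ij B W V by simp
    qed (use B W V in auto)
  qed
  have ent: "W $$ (i,j) \<in> \<int> \<and> W $$ (i,j) \<ge> 0" if ij: "i < k" "j < r" for i j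
  proof -
    have x: "xf j \<in> carrier_vec m" using xf ij by blast
    have Wij: "W $$ (i,j) = (B *\<^sub>v xf j) $ i" unfolding W_def using B R ij colR by simp
    have "A *\<^sub>v xf j = U *\<^sub>v (V *\<^sub>v xf j)" unfolding AUV using U V x by simp
    also have "\<dots> = U *\<^sub>v col (1\<^sub>m r) j" using xf ij U by simp
    also have "\<dots> = col (U * 1\<^sub>m r) j" using ij U by (intro col_mult2[symmetric]) auto
    also have "\<dots> = col U j" using U by simp
    finally have Ax: "A *\<^sub>v xf j = col U j" .
    have "\<forall>i<n. (A *\<^sub>v xf j) $ i \<in> \<int>" unfolding Ax using Uent U ij by simp
    then have "\<forall>i<k. (B *\<^sub>v xf j) $ i \<in> \<int>" using integ x by blast
    moreover have "\<forall>i<n. (A *\<^sub>v xf j) $ i \<ge> 0" unfolding Ax using Uent U ij by simp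
    then have "\<forall>i<k. (B *\<^sub>v xf j) $ i \<ge> 0" using nonneg x by blast
    ultimately show ?thesis unfolding Wij using ij by blast
  qed
  show ?thesis using W BWV ent by blast
qed


lemma real_nat_floor: "(w::real) \<in> \<int> \<Longrightarrow> w \<ge> 0 \<Longrightarrow> real (nat \<lfloor>w\<rfloor>) = w"
  by (elim Ints_cases) auto

lemma key_nat:
  fixes A B U V :: "nat mat"
  assumes A: "A \<in> carrier_mat n m" and B: "B \<in> carrier_mat k m"
    and U: "U \<in> carrier_mat n r" and V: "V \<in> carrier_mat r m" and AUV: "A = U * V"
    and rk: "vec_space.rank n (real_mat A) = r"
    and integ: "\<forall>x \<in> carrier_vec m. (\<forall>i<n. (real_mat A *\<^sub>v x) $ i \<in> \<int>) \<longrightarrow> (\<forall>i<k. (real_mat B *\<^sub>v x) $ i \<in> \<int>)"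
    and nonneg: "\<forall>x \<in> carrier_vec m. (\<forall>i<n. (real_mat A *\<^sub>v x) $ i \<ge> 0) \<longrightarrow> (\<forall>i<k. (real_mat B *\<^sub>v x) $ i \<ge> 0)"
  shows "\<exists>W. W \<in> carrier_mat k r \<and> B = W * V"
proof -
  have rA: "real_mat A = real_mat U * real_mat V" using real_mat_mult[OF U V] AUV by simp
  have Uent: "\<forall>i<n. \<forall>j<r. real_mat U $$ (i,j) \<in> \<int> \<and> real_mat U $$ (i,j) \<ge> 0" using U by auto
  obtain W' where W': "W' \<in> carrier_mat k r" "real_mat B = W' * real_mat V"
      "\<forall>i<k. \<forall>j<r. W' $$ (i,j) \<in> \<int> \<and> W' $$ (i,j) \<ge> 0"
    using key_real[of "real_mat A" n m "real_mat B" k "real_mat U" r "real_mat V", OF _ _ _ _ rA _ integ nonneg Uent]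
      A B U V rk by auto
  define W where "W = map_mat (\<lambda>x. nat \<lfloor>x\<rfloor>) W'"
  have W: "W \<in> carrier_mat k r" unfolding W_def using W'(1) by auto
  have rW: "real_mat W = W'"
    by (rule eq_matI) (use W'(1) W'(3) real_nat_floor in \<open>auto simp: W_def\<close>)
  have eq: "real_mat B = real_mat (W * V)" using real_mat_mult[OF W V] rW W'(2) by simp
  have "B = W * V"
  proof (rule eq_matI)
    fix i j assume ij: "i < dim_row (W * V)" "j < dim_col (W * V)"
    have "real_mat B $$ (i,j) = real_mat (W * V) $$ (i,j)" using eq by simp
    then show "B $$ (i,j) = (W * V) $$ (i,j)" using ij B W V by simp
  qed (use B W V in auto)
  then show ?thesis using W by blast
qed

lemma nn_ex: fixes A :: "nat mat" shows "\<exists>j B C. B \<in> carrier_mat (dim_row A) j \<and> C \<in> carrier_mat j (dim_col A) \<and> A = B * C"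
proof -
  have "1\<^sub>m (dim_row A) \<in> carrier_mat (dim_row A) (dim_row A)" "A \<in> carrier_mat (dim_row A) (dim_col A)" "A = 1\<^sub>m (dim_row A) * A"
    by auto
  then show ?thesis by blast
qed

lemma nn_le: "B \<in> carrier_mat (dim_row A) j \<Longrightarrow> C \<in> carrier_mat j (dim_col A) \<Longrightarrow> A = B * C \<Longrightarrow> nn_int_rank A \<le> j"
  unfolding nn_int_rank_def by (rule Least_le) blast

lemma nn_obtain: "\<exists>B C. B \<in> carrier_mat (dim_row A) (nn_int_rank A) \<and> C \<in> carrier_mat (nn_int_rank A) (dim_col A) \<and> A = B * C"
  unfolding nn_int_rank_def by (rule LeastI_ex) (rule nn_ex)

lemma nn_ge: assumes A: "A \<in> carrier_mat n m" shows "vec_space.rank n (real_mat A) \<le> nn_int_rank A"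
proof -
  obtain U V where UV: "U \<in> carrier_mat (dim_row A) (nn_int_rank A)" "V \<in> carrier_mat (nn_int_rank A) (dim_col A)" "A = U * V"
    using nn_obtain by blast
  have U: "U \<in> carrier_mat n (nn_int_rank A)" and V: "V \<in> carrier_mat (nn_int_rank A) m" using UV(1,2) A by auto
  have "real_mat A = real_mat U * real_mat V" using real_mat_mult[OF U V] UV(3) by simp
  then show ?thesis using rank_le_factor[of "real_mat U" n _ "real_mat V" m] U V by simp
qed

lemma one_dir:
  fixes A B :: "nat mat"
  assumes A: "A \<in> carrier_mat n m" and B: "B \<in> carrier_mat k m"
    and rk: "vec_space.rank n (real_mat A) = r"
    and integ: "\<forall>x \<in> carrier_vec m. (\<forall>i<n. (real_mat A *\<^sub>v x) $ i \<in> \<int>) \<longrightarrow> (\<forall>i<k. (real_mat B *\<^sub>v x) $ i \<in> \<int>)"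
    and nonneg: "\<forall>x \<in> carrier_vec m. (\<forall>i<n. (real_mat A *\<^sub>v x) $ i \<ge> 0) \<longrightarrow> (\<forall>i<k. (real_mat B *\<^sub>v x) $ i \<ge> 0)"
    and nA: "nn_int_rank A = r"
  shows "nn_int_rank B \<le> r"
proof -
  obtain U V where UV: "U \<in> carrier_mat (dim_row A) (nn_int_rank A)" "V \<in> carrier_mat (nn_int_rank A) (dim_col A)" "A = U * V"
    using nn_obtain by blast
  have U: "U \<in> carrier_mat n r" and V: "V \<in> carrier_mat r m" using UV(1,2) A nA by auto
  obtain W where W: "W \<in> carrier_mat k r" "B = W * V"
    using key_nat[OF A B U V UV(3) rk integ nonneg] by blast
  show ?thesis by (rule nn_le[of W B r V]) (use W V B in auto)
qed

theorem mainTheorem3: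
  fixes A B :: "nat mat" and n k m r :: nat
  assumes A: "A \<in> carrier_mat n m"
    and B: "B \<in> carrier_mat k m"
    and rankA: "vec_space.rank n (real_mat A) = r"
    and rankB: "vec_space.rank k (real_mat B) = r"
    and rowsp: "vec_space.row_space m (real_mat A) = vec_space.row_space m (real_mat B)"
    and integ: "\<forall>x \<in> carrier_vec m.
        (\<forall>i<n. (real_mat A *\<^sub>v x) $ i \<in> \<int>) \<longleftrightarrow> (\<forall>i<k. (real_mat B *\<^sub>v x) $ i \<in> \<int>)"
    and nonneg: "\<forall>x \<in> carrier_vec m.
        (\<forall>i<n. (real_mat A *\<^sub>v x) $ i \<ge> 0) \<longleftrightarrow> (\<forall>i<k. (real_mat B *\<^sub>v x) $ i \<ge> 0)"
  shows "(nn_int_rank A = r \<and> nn_int_rank B = r) \<or> (nn_int_rank A > r \<and> nn_int_rank B > r)"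
proof -
  have geA: "r \<le> nn_int_rank A" using nn_ge[OF A] rankA by simp
  have geB: "r \<le> nn_int_rank B" using nn_ge[OF B] rankB by simp
  have AB: "nn_int_rank A = r \<Longrightarrow> nn_int_rank B \<le> r"
    by (rule one_dir[OF A B rankA]) (use integ nonneg in auto)
  have BA: "nn_int_rank B = r \<Longrightarrow> nn_int_rank A \<le> r"
    by (rule one_dir[OF B A rankB]) (use integ nonneg in auto)
  show ?thesis using geA geB AB BA by linarith
qed

end
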